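(* Let $G$ be a finite group and $T$ a $G$-transfer system. Two subgroups are in the same connected component of $T$ if and only if they are in the same connected component of $\mathrm{Hull}(T)$. Moreover, if $K\le H$ and $K$ and $H$ lie in the same connected component of $T$, then $\mathrm{Hull}(T)$ contains the edge $K\to H$.
   Context: A $G$-transfer system is a partial order $\to$ on the set of subgroups of $G$ such that: $K\to H$ implies $K\le H$; $H\to H$ for all $H$; $L\to K$ and $K\to H$ imply $L\to H$; $K\to H$ implies $K\cap L\to H\cap L$ for every $L\le G$; $K\to H$ implies $gKg^{-1}\to gHg^{-1}$ for all $g\in G$. We view $T$ as a directed graph on the subgroups of $G$; two subgroups are in the same connected component if joined by a path in the underlying undirected graph. A $G$-transfer system is saturated if whenever $L\le K\le H$ and $L\to H$ is in it, then $K\to H$ is in it. The saturated hull $\mathrm{Hull}(T)$ is the smallest saturated $G$-transfer system containing $T$. *)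

theory Defs
  imports "HOL-Algebra.Group"
begin

definition conj_sub :: "('a, 'b) monoid_scheme \<Rightarrow> 'a \<Rightarrow> 'a set \<Rightarrow> 'a set" where
  "conj_sub G g K = (\<lambda>k. g \<otimes>\<^bsub>G\<^esub> k \<otimes>\<^bsub>G\<^esub> inv\<^bsub>G\<^esub> g) ` K"

definition transfer_system :: "('a, 'b) monoid_scheme \<Rightarrow> ('a set \<times> 'a set) set \<Rightarrow> bool" where
  "transfer_system G T \<longleftrightarrow>
     (\<forall>K H. (K, H) \<in> T \<longrightarrow> subgroup K G \<and> subgroup H G \<and> K \<subseteq> H) \<and>
     (\<forall>H. subgroup H G \<longrightarrow> (H, H) \<in> T) \<and>
     (\<forall>L K H. (L, K) \<in> T \<longrightarrow> (K, H) \<in> T \<longrightarrow> (L, H) \<in> T) \<and>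
     (\<forall>K H L. (K, H) \<in> T \<longrightarrow> subgroup L G \<longrightarrow> (K \<inter> L, H \<inter> L) \<in> T) \<and>
     (\<forall>K H g. (K, H) \<in> T \<longrightarrow> g \<in> carrier G \<longrightarrow> (conj_sub G g K, conj_sub G g H) \<in> T)"

definition saturated :: "('a, 'b) monoid_scheme \<Rightarrow> ('a set \<times> 'a set) set \<Rightarrow> bool" where
  "saturated G T \<longleftrightarrow> transfer_system G T \<and>
     (\<forall>L K H. subgroup L G \<longrightarrow> subgroup K G \<longrightarrow> subgroup H G \<longrightarrow>
        L \<subseteq> K \<longrightarrow> K \<subseteq> H \<longrightarrow> (L, H) \<in> T \<longrightarrow> (K, H) \<in> T)"

definition Hull :: "('a, 'b) monoid_scheme \<Rightarrow> ('a set \<times> 'a set) set \<Rightarrow> ('a set \<times> 'a set) set" where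
  "Hull G T = \<Inter> {S. saturated G S \<and> T \<subseteq> S}"

definition same_component :: "('a set \<times> 'a set) set \<Rightarrow> 'a set \<Rightarrow> 'a set \<Rightarrow> bool" where
  "same_component T K H \<longleftrightarrow> (K, H) \<in> (T \<union> T\<inverse>)\<^sup>*"

end

theory Submission
  imports Defs
begin

lemma comp_map:
  assumes "\<And>a b. (a,b)\<in>T \<Longrightarrow> (f a, f b)\<in>T" "(x,y)\<in>(T\<union>T\<inverse>)\<^sup>*"
  shows "(f x, f y)\<in>(T\<union>T\<inverse>)\<^sup>*"
  using assms(2)
proof (induction rule: rtrancl_induct)
  case base show ?case by simp
next
  case (step y z)
  then have "(f y, f z) \<in> T\<union>T\<inverse>" using assms(1) by auto
  then show ?case using step.IH by (meson rtrancl.rtrancl_into_rtrancl)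
qed

lemma comp_sym:
  assumes "(x,y)\<in>(T\<union>T\<inverse>)\<^sup>*"
  shows "(y,x)\<in>(T\<union>T\<inverse>)\<^sup>*"
proof -
  have "(y,x) \<in> ((T\<union>T\<inverse>)\<inverse>)\<^sup>*" using assms by (simp add: rtrancl_converseI)
  moreover have "(T\<union>T\<inverse>)\<inverse> = T\<union>T\<inverse>" by auto
  ultimately show ?thesis by simp
qed

lemma tsD:
  assumes "transfer_system G T"
  shows "\<And>K H. (K, H) \<in> T \<Longrightarrow> subgroup K G \<and> subgroup H G \<and> K \<subseteq> H"
   and "\<And>H. subgroup H G \<Longrightarrow> (H, H) \<in> T"
   and "\<And>L K H. (L, K) \<in> T \<Longrightarrow> (K, H) \<in> T \<Longrightarrow> (L, H) \<in> T"
   and "\<And>K H L. (K, H) \<in> T \<Longrightarrow> subgroup L G \<Longrightarrow> (K \<inter> L, H \<inter> L) \<in> T"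
   and "\<And>K H g. (K, H) \<in> T \<Longrightarrow> g \<in> carrier G \<Longrightarrow> (conj_sub G g K, conj_sub G g H) \<in> T"
proof -
  note a = assms[unfolded transfer_system_def]
  show "\<And>K H. (K, H) \<in> T \<Longrightarrow> subgroup K G \<and> subgroup H G \<and> K \<subseteq> H" using conjunct1[OF a] by blast
  show "\<And>H. subgroup H G \<Longrightarrow> (H, H) \<in> T" using conjunct1[OF conjunct2[OF a]] by blast
  show "\<And>L K H. (L, K) \<in> T \<Longrightarrow> (K, H) \<in> T \<Longrightarrow> (L, H) \<in> T" using conjunct1[OF conjunct2[OF conjunct2[OF a]]] by blast
  show "\<And>K H L. (K, H) \<in> T \<Longrightarrow> subgroup L G \<Longrightarrow> (K \<inter> L, H \<inter> L) \<in> T" using conjunct1[OF conjunct2[OF conjunct2[OF conjunct2[OF a]]]] by blast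
  show "\<And>K H g. (K, H) \<in> T \<Longrightarrow> g \<in> carrier G \<Longrightarrow> (conj_sub G g K, conj_sub G g H) \<in> T" using conjunct2[OF conjunct2[OF conjunct2[OF conjunct2[OF a]]]] by blast
qed

lemma satD:
  assumes "saturated G S"
  shows "\<And>K H. (K, H) \<in> S \<Longrightarrow> subgroup K G \<and> subgroup H G \<and> K \<subseteq> H"
   and "\<And>H. subgroup H G \<Longrightarrow> (H, H) \<in> S"
   and "\<And>L K H. (L, K) \<in> S \<Longrightarrow> (K, H) \<in> S \<Longrightarrow> (L, H) \<in> S"
   and "\<And>K H L. (K, H) \<in> S \<Longrightarrow> subgroup L G \<Longrightarrow> (K \<inter> L, H \<inter> L) \<in> S"
   and "\<And>K H g. (K, H) \<in> S \<Longrightarrow> g \<in> carrier G \<Longrightarrow> (conj_sub G g K, conj_sub G g H) \<in> S"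
   and "\<And>L K H. subgroup L G \<Longrightarrow> subgroup K G \<Longrightarrow> subgroup H G \<Longrightarrow>
        L \<subseteq> K \<Longrightarrow> K \<subseteq> H \<Longrightarrow> (L, H) \<in> S \<Longrightarrow> (K, H) \<in> S"
proof -
  have t: "transfer_system G S" using assms unfolding saturated_def by (rule conjunct1)
  show "\<And>K H. (K, H) \<in> S \<Longrightarrow> subgroup K G \<and> subgroup H G \<and> K \<subseteq> H"
   and "\<And>H. subgroup H G \<Longrightarrow> (H, H) \<in> S"
   and "\<And>L K H. (L, K) \<in> S \<Longrightarrow> (K, H) \<in> S \<Longrightarrow> (L, H) \<in> S"
   and "\<And>K H L. (K, H) \<in> S \<Longrightarrow> subgroup L G \<Longrightarrow> (K \<inter> L, H \<inter> L) \<in> S"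
   and "\<And>K H g. (K, H) \<in> S \<Longrightarrow> g \<in> carrier G \<Longrightarrow> (conj_sub G g K, conj_sub G g H) \<in> S"
    using tsD[OF t] by auto
  show "\<And>L K H. subgroup L G \<Longrightarrow> subgroup K G \<Longrightarrow> subgroup H G \<Longrightarrow>
        L \<subseteq> K \<Longrightarrow> K \<subseteq> H \<Longrightarrow> (L, H) \<in> S \<Longrightarrow> (K, H) \<in> S"
    using conjunct2[OF assms[unfolded saturated_def]] by blast
qed

lemma satI:
  assumes "\<And>K H. (K, H) \<in> S \<Longrightarrow> subgroup K G \<and> subgroup H G \<and> K \<subseteq> H"
   and "\<And>H. subgroup H G \<Longrightarrow> (H, H) \<in> S"
   and "\<And>L K H. (L, K) \<in> S \<Longrightarrow> (K, H) \<in> S \<Longrightarrow> (L, H) \<in> S"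
   and "\<And>K H L. (K, H) \<in> S \<Longrightarrow> subgroup L G \<Longrightarrow> (K \<inter> L, H \<inter> L) \<in> S"
   and "\<And>K H g. (K, H) \<in> S \<Longrightarrow> g \<in> carrier G \<Longrightarrow> (conj_sub G g K, conj_sub G g H) \<in> S"
   and "\<And>L K H. subgroup L G \<Longrightarrow> subgroup K G \<Longrightarrow> subgroup H G \<Longrightarrow>
        L \<subseteq> K \<Longrightarrow> K \<subseteq> H \<Longrightarrow> (L, H) \<in> S \<Longrightarrow> (K, H) \<in> S"
  shows "saturated G S"
  unfolding saturated_def transfer_system_def
  apply (intro conjI)
  using assms(1) apply blast
  using assms(2) apply blast
  using assms(3) apply blast
  using assms(4) apply blast
  using assms(5) apply blast
  using assms(6) apply blast
  done

lemma sat_S: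
  assumes ts: "transfer_system G T"
  shows "saturated G {(K,H). subgroup K G \<and> subgroup H G \<and> K \<subseteq> H \<and> (K,H)\<in>(T\<union>T\<inverse>)\<^sup>*}"
    (is "saturated G ?S")
proof -
  note T1 = tsD(1)[OF ts] and T2 = tsD(2)[OF ts] and T4 = tsD(4)[OF ts] and T5 = tsD(5)[OF ts]
  have restr: "subgroup (K \<inter> L) G" if "subgroup K G" "subgroup L G" for K L
    using T1[OF T4[OF T2[OF that(1)] that(2)]] by blast
  have conj: "subgroup (conj_sub G g K) G" if "subgroup K G" "g \<in> carrier G" for K g
    using T1[OF T5[OF T2[OF that(1)] that(2)]] by blast
  show ?thesis
  proof (rule satI)
    fix K H assume "(K,H) \<in> ?S" then show "subgroup K G \<and> subgroup H G \<and> K \<subseteq> H" by auto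
  next
    fix H assume "subgroup H G" then show "(H,H) \<in> ?S" by auto
  next
    fix L K H assume "(L,K) \<in> ?S" "(K,H) \<in> ?S" then show "(L,H) \<in> ?S"
      by (auto intro: rtrancl_trans)
  next
    fix K H L assume a: "(K,H) \<in> ?S" "subgroup L G"
    have "(K \<inter> L, H \<inter> L) \<in> (T\<union>T\<inverse>)\<^sup>*"
      using a T4 by (intro comp_map[where f="\<lambda>X. X \<inter> L"]) auto
    then show "(K \<inter> L, H \<inter> L) \<in> ?S" using a restr by auto
  next
    fix K H g assume a: "(K,H) \<in> ?S" "g \<in> carrier G"
    have "(conj_sub G g K, conj_sub G g H) \<in> (T\<union>T\<inverse>)\<^sup>*"
      using a T5 by (intro comp_map[where f="conj_sub G g"]) auto
    moreover have "conj_sub G g K \<subseteq> conj_sub G g H" using a unfolding conj_sub_def by auto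
    ultimately show "(conj_sub G g K, conj_sub G g H) \<in> ?S" using a conj by auto
  next
    fix L K H assume a: "subgroup L G" "subgroup K G" "subgroup H G" "L \<subseteq> K" "K \<subseteq> H" "(L,H) \<in> ?S"
    have "(L \<inter> K, H \<inter> K) \<in> (T\<union>T\<inverse>)\<^sup>*"
      using a T4 by (intro comp_map[where f="\<lambda>X. X \<inter> K"]) auto
    moreover have "L \<inter> K = L" "H \<inter> K = K" using a by auto
    ultimately have "(K, L) \<in> (T\<union>T\<inverse>)\<^sup>*" using comp_sym by metis
    then have "(K,H) \<in> (T\<union>T\<inverse>)\<^sup>*" using a by (auto intro: rtrancl_trans)
    then show "(K,H) \<in> ?S" using a by auto
  qed
qed

lemma Hull_mem: "(a,b) \<in> Hull G T \<longleftrightarrow> (\<forall>S. saturated G S \<and> T \<subseteq> S \<longrightarrow> (a,b) \<in> S)"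
  unfolding Hull_def by blast

lemma Hull_sat:
  assumes ts: "transfer_system G T"
  shows "saturated G (Hull G T)"
proof -
  let ?S = "{(K,H). subgroup K G \<and> subgroup H G \<and> K \<subseteq> H \<and> (K,H)\<in>(T\<union>T\<inverse>)\<^sup>*}"
  have S: "saturated G ?S" using sat_S[OF ts] .
  have TS: "T \<subseteq> ?S" using tsD(1)[OF ts] by auto
  show ?thesis
  proof (rule satI)
    fix K H assume "(K,H) \<in> Hull G T"
    then have "\<forall>S. saturated G S \<and> T \<subseteq> S \<longrightarrow> (K,H) \<in> S" unfolding Hull_mem .
    then have "(K,H) \<in> ?S" using S TS by (meson spec[of _ ?S])
    then show "subgroup K G \<and> subgroup H G \<and> K \<subseteq> H" by auto
  next
    fix H assume h: "subgroup H G" show "(H,H) \<in> Hull G T"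
      unfolding Hull_mem
    proof (intro allI impI)
      fix S assume s: "saturated G S \<and> T \<subseteq> S"
      then show "(H,H) \<in> S" using satD(2)[OF conjunct1[OF s]] h by simp
    qed
  next
    fix L K H assume h: "(L,K) \<in> Hull G T" "(K,H) \<in> Hull G T" show "(L,H) \<in> Hull G T"
      unfolding Hull_mem
    proof (intro allI impI)
      fix S assume s: "saturated G S \<and> T \<subseteq> S"
      then have "(L,K) \<in> S" "(K,H) \<in> S" using h unfolding Hull_mem by simp_all
      then show "(L,H) \<in> S" using satD(3)[OF conjunct1[OF s]] by simp
    qed
  next
    fix K H L assume h: "(K,H) \<in> Hull G T" "subgroup L G" show "(K \<inter> L, H \<inter> L) \<in> Hull G T"
      unfolding Hull_mem
    proof (intro allI impI)
      fix S assume s: "saturated G S \<and> T \<subseteq> S"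
      then have "(K,H) \<in> S" using h unfolding Hull_mem by simp
      then show "(K \<inter> L, H \<inter> L) \<in> S" using satD(4)[OF conjunct1[OF s]] h(2) by simp
    qed
  next
    fix K H g assume h: "(K,H) \<in> Hull G T" "g \<in> carrier G"
    show "(conj_sub G g K, conj_sub G g H) \<in> Hull G T"
      unfolding Hull_mem
    proof (intro allI impI)
      fix S assume s: "saturated G S \<and> T \<subseteq> S"
      then have "(K,H) \<in> S" using h unfolding Hull_mem by simp
      then show "(conj_sub G g K, conj_sub G g H) \<in> S" using satD(5)[OF conjunct1[OF s]] h(2) by simp
    qed
  next
    fix L K H assume h: "subgroup L G" "subgroup K G" "subgroup H G" "L \<subseteq> K" "K \<subseteq> H" "(L,H) \<in> Hull G T"
    show "(K,H) \<in> Hull G T"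
      unfolding Hull_mem
    proof (intro allI impI)
      fix S assume s: "saturated G S \<and> T \<subseteq> S"
      then have "(L,H) \<in> S" using h unfolding Hull_mem by simp
      then show "(K,H) \<in> S" using satD(6)[OF conjunct1[OF s]] h by simp
    qed
  qed
qed

theorem mainTheorem2:
  fixes G :: "('a, 'b) monoid_scheme" and T :: "('a set \<times> 'a set) set"
  assumes "group G" and "finite (carrier G)" and "transfer_system G T"
  shows "(\<forall>K H. subgroup K G \<longrightarrow> subgroup H G \<longrightarrow>
            (same_component T K H \<longleftrightarrow> same_component (Hull G T) K H)) \<and>
         (\<forall>K H. subgroup K G \<longrightarrow> subgroup H G \<longrightarrow> K \<subseteq> H \<longrightarrow>
            same_component T K H \<longrightarrow> (K, H) \<in> Hull G T)"
proof -
  note ts = assms(3)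
  let ?HT = "Hull G T"
  let ?S = "{(K,H). subgroup K G \<and> subgroup H G \<and> K \<subseteq> H \<and> (K,H)\<in>(T\<union>T\<inverse>)\<^sup>*}"
  have S: "saturated G ?S" using sat_S[OF ts] .
  have TS: "T \<subseteq> ?S" using tsD(1)[OF ts] by auto
  have HS: "?HT \<subseteq> ?S"
  proof (rule subrelI)
    fix a b assume "(a,b) \<in> ?HT"
    then have "\<forall>S. saturated G S \<and> T \<subseteq> S \<longrightarrow> (a,b) \<in> S" unfolding Hull_mem .
    then show "(a,b) \<in> ?S" using S TS by (meson spec[of _ ?S])
  qed
  have THT: "T \<subseteq> ?HT"
  proof (rule subrelI)
    fix a b assume "(a,b) \<in> T"
    then show "(a,b) \<in> ?HT" unfolding Hull_mem by blast
  qed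
  have hs: "saturated G ?HT" using Hull_sat[OF ts] .
  note H1 = satD(1)[OF hs] and H2 = satD(2)[OF hs] and H3 = satD(3)[OF hs]
    and H4 = satD(4)[OF hs] and H6 = satD(6)[OF hs]
  have restr: "subgroup (K \<inter> L) G" if "subgroup K G" "subgroup L G" for K L
    using H1[OF H4[OF H2[OF that(1)] that(2)]] by blast
  have key: "(X \<inter> Y, X) \<in> ?HT \<and> (X \<inter> Y, Y) \<in> ?HT"
    if X: "subgroup X G" and p: "(X,Y)\<in>(T\<union>T\<inverse>)\<^sup>*" for X Y
    using p
  proof (induction rule: rtrancl_induct)
    case base then show ?case using H2[OF X] by simp
  next
    case (step Y Z)
    have IH1: "(X \<inter> Y, X) \<in> ?HT" and IH2: "(X \<inter> Y, Y) \<in> ?HT" using step.IH by auto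
    have sY: "subgroup Y G" using H1[OF IH2] by blast
    show ?case
    proof (cases "(Y,Z) \<in> T")
      case True
      then have YZ: "(Y,Z) \<in> ?HT" using THT by blast
      have sZ: "subgroup Z G" and YsZ: "Y \<subseteq> Z" using H1[OF YZ] by auto
      have sXY: "subgroup (X \<inter> Y) G" using restr[OF X sY] .
      have sXZ: "subgroup (X \<inter> Z) G" using restr[OF X sZ] .
      have 1: "(X \<inter> Z, X) \<in> ?HT" using H6[OF sXY sXZ X _ _ IH1] YsZ by blast
      have "(X \<inter> Y, Z) \<in> ?HT" using H3[OF IH2 YZ] .
      then have 2: "(X \<inter> Z, Z) \<in> ?HT" using H6[OF sXY sXZ sZ] YsZ by blast
      show ?thesis using 1 2 by blast
    next
      case False
      then have ZY: "(Z,Y) \<in> ?HT" using step.hyps(2) THT by blast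
      have sZ: "subgroup Z G" and ZsY: "Z \<subseteq> Y" using H1[OF ZY] by auto
      have "(X \<inter> Y \<inter> Z, Y \<inter> Z) \<in> ?HT" using H4[OF IH2 sZ] .
      moreover have "X \<inter> Y \<inter> Z = X \<inter> Z" "Y \<inter> Z = Z" using ZsY by auto
      ultimately have 2: "(X \<inter> Z, Z) \<in> ?HT" by simp
      have "(Z \<inter> X, Y \<inter> X) \<in> ?HT" using H4[OF ZY X] .
      then have "(X \<inter> Z, X \<inter> Y) \<in> ?HT" by (simp add: Int_commute)
      then have 1: "(X \<inter> Z, X) \<in> ?HT" using H3 IH1 by blast
      show ?thesis using 1 2 by blast
    qed
  qed
  have part2: "\<forall>K H. subgroup K G \<longrightarrow> subgroup H G \<longrightarrow> K \<subseteq> H \<longrightarrow>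
            same_component T K H \<longrightarrow> (K, H) \<in> ?HT"
  proof (intro allI impI)
    fix K H assume a: "subgroup K G" "subgroup H G" "K \<subseteq> H" "same_component T K H"
    have "(K \<inter> H, H) \<in> ?HT" using key[OF a(1)] a(4) unfolding same_component_def by blast
    moreover have "K \<inter> H = K" using a(3) by auto
    ultimately show "(K,H) \<in> ?HT" by simp
  qed
  have sub1: "(T\<union>T\<inverse>)\<^sup>* \<subseteq> (?HT\<union>?HT\<inverse>)\<^sup>*" using THT by (intro rtrancl_mono) blast
  have "?HT\<union>?HT\<inverse> \<subseteq> (T\<union>T\<inverse>)\<^sup>*"
  proof (rule subrelI)
    fix a b assume "(a,b) \<in> ?HT\<union>?HT\<inverse>"
    then consider "(a,b) \<in> ?HT" | "(b,a) \<in> ?HT" by auto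
    then show "(a,b) \<in> (T\<union>T\<inverse>)\<^sup>*"
    proof cases
      case 1 then show ?thesis using HS by auto
    next
      case 2 then have "(b,a) \<in> (T\<union>T\<inverse>)\<^sup>*" using HS by auto
      then show ?thesis by (rule comp_sym)
    qed
  qed
  then have sub2: "(?HT\<union>?HT\<inverse>)\<^sup>* \<subseteq> (T\<union>T\<inverse>)\<^sup>*"
    by (rule rtrancl_subset_rtrancl)
  show ?thesis using part2 sub1 sub2 unfolding same_component_def by blast
qed

end
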